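(* Let $d\in\mathbb{Z}_{>0}$ and $X=\begin{pmatrix}z\sqrt\epsilon&u\sqrt\epsilon\\ v\sqrt\epsilon&z\sqrt\epsilon\end{pmatrix}\in\mathfrak{k}_{-d}$ with $z,u,v\in F$ such that $\nu(z),\nu(v)>-\lceil\frac d2\rceil$ and $\nu(u)=-d$. Let $X_u=\begin{pmatrix}0&u\sqrt\epsilon\\0&0\end{pmatrix}$. Then $\Psi_X=\Psi_{X_u}$ as characters of $\mathcal{J}_d$, and $T(X)\mathcal{J}_d=T(X_u)\mathcal{J}_d=Z\mathcal{U}\mathcal{J}_d$.
   Context: $F$ non-archimedean local field, $p\neq2$, uniformiser $\varpi$, valuation $\nu$; $E=F[\sqrt\epsilon]$ unramified quadratic. $G=\mathbb{U}(1,1)(F)$ (hermitian form $\mathrm{w}=\begin{pmatrix}0&1\\1&0\end{pmatrix}$) with center $Z$ (scalar matrices, $\cong E^1$), $\mathcal{K}=G\cap M_2(\mathcal{O}_E)$, $\mathcal{U}=\left\{\begin{pmatrix}1&\sqrt\epsilon b\\0&1\end{pmatrix}:b\in F\right\}\cap\mathcal{K}$. $\mathfrak{k}_{-d}$: elements of the Lie algebra with diagonal entries in $\mathfrak{p}_E^{-d}$ and off-diagonal entries in $\sqrt\epsilon\mathfrak{p}_F^{-d}$. $\mathcal{J}_d=\begin{pmatrix}1+\mathfrak{p}_E^{\lceil d/2\rceil}&\mathfrak{p}_E^{\lceil d/2\rceil}\\ \mathfrak{p}_E^{\lceil (d+1)/2\rceil}&1+\mathfrak{p}_E^{\lceil d/2\rceil}\end{pmatrix}\cap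 G$. $\psi$: additive character of $E$ trivial on $\mathfrak{p}_E$, nontrivial on $\mathcal{O}_E$; $\Psi_Y(k)=\psi(\mathrm{Tr}(Y(k-I)))$. $T(Y)$ denotes the centralizer of $Y$ in $\mathcal{K}$. *)

theory Defs
  imports Complex_Main
begin

text \<open>The valuation is nu :: 'a => int on nonzero elements; nu 0 = +infinity is encoded
  by the predicates below (val_ge nu x n means nu(x) >= n, with 0 satisfying all).\<close>

definition val_ge :: "('a::field \<Rightarrow> int) \<Rightarrow> 'a \<Rightarrow> int \<Rightarrow> bool" where
  "val_ge \<nu> x n \<longleftrightarrow> x = 0 \<or> \<nu> x \<ge> n"

definition val_gt :: "('a::field \<Rightarrow> int) \<Rightarrow> 'a \<Rightarrow> int \<Rightarrow> bool" where
  "val_gt \<nu> x n \<longleftrightarrow> x = 0 \<or> \<nu> x > n"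

definition nonarch_local_field :: "('a::field \<Rightarrow> int) \<Rightarrow> bool" where
  "nonarch_local_field \<nu> \<longleftrightarrow>
     (\<forall>x y. x \<noteq> 0 \<longrightarrow> y \<noteq> 0 \<longrightarrow> \<nu> (x * y) = \<nu> x + \<nu> y) \<and>
     (\<forall>x y. x \<noteq> 0 \<longrightarrow> y \<noteq> 0 \<longrightarrow> x + y \<noteq> 0 \<longrightarrow> \<nu> (x + y) \<ge> min (\<nu> x) (\<nu> y)) \<and>
     (\<exists>unif. unif \<noteq> 0 \<and> \<nu> unif = 1) \<and>
     (\<exists>S. finite S \<and> (\<forall>x. val_ge \<nu> x 0 \<longrightarrow> (\<exists>s\<in>S. val_ge \<nu> s 0 \<and> val_ge \<nu> (x - s) 1))) \<and>
     (\<forall>x :: nat \<Rightarrow> 'a. (\<forall>n. \<exists>N. \<forall>i\<ge>N. \<forall>j\<ge>N. val_ge \<nu> (x i - x j) n) \<longrightarrow>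
        (\<exists>L. \<forall>n. \<exists>N. \<forall>i\<ge>N. val_ge \<nu> (x i - L) n))"

definition residue_char_not_2 :: "('a::field \<Rightarrow> int) \<Rightarrow> bool" where
  "residue_char_not_2 \<nu> \<longleftrightarrow> (2::'a) \<noteq> 0 \<and> \<nu> 2 = 0"

section \<open>E = F[sqrt eps], elements a + b sqrt eps represented as pairs (a,b)\<close>

definition eadd :: "'a::field \<times> 'a \<Rightarrow> 'a \<times> 'a \<Rightarrow> 'a \<times> 'a" where
  "eadd x y = (fst x + fst y, snd x + snd y)"
definition esub :: "'a::field \<times> 'a \<Rightarrow> 'a \<times> 'a \<Rightarrow> 'a \<times> 'a" where
  "esub x y = (fst x - fst y, snd x - snd y)"
definition emul :: "'a::field \<Rightarrow> 'a \<times> 'a \<Rightarrow> 'a \<times> 'a \<Rightarrow> 'a \<times> 'a" where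
  "emul \<epsilon> x y = (fst x * fst y + \<epsilon> * snd x * snd y, fst x * snd y + snd x * fst y)"
definition econj :: "'a::field \<times> 'a \<Rightarrow> 'a \<times> 'a" where
  "econj x = (fst x, - snd x)"
definition e0 :: "'a::field \<times> 'a" where "e0 = (0, 0)"
definition e1 :: "'a::field \<times> 'a" where "e1 = (1, 0)"
definition esqrt :: "'a::field \<Rightarrow> 'a \<times> 'a" where "esqrt b = (0, b)"

text \<open>p_E^n (E/F unramified, so nu_E(a + b sqrt eps) = min(nu a, nu b)).\<close>
definition pE :: "('a::field \<Rightarrow> int) \<Rightarrow> int \<Rightarrow> ('a \<times> 'a) set" where
  "pE \<nu> n = {x. val_ge \<nu> (fst x) n \<and> val_ge \<nu> (snd x) n}"

datatype 'e m2 = M2 'e 'e 'e 'e  \<comment> \<open>M2 a b c d = (a b; c d)\<close>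

fun mmul :: "'a::field \<Rightarrow> ('a \<times> 'a) m2 \<Rightarrow> ('a \<times> 'a) m2 \<Rightarrow> ('a \<times> 'a) m2" where
  "mmul \<epsilon> (M2 a b c d) (M2 a' b' c' d') =
     M2 (eadd (emul \<epsilon> a a') (emul \<epsilon> b c')) (eadd (emul \<epsilon> a b') (emul \<epsilon> b d'))
        (eadd (emul \<epsilon> c a') (emul \<epsilon> d c')) (eadd (emul \<epsilon> c b') (emul \<epsilon> d d'))"
fun madd :: "('a::field \<times> 'a) m2 \<Rightarrow> ('a \<times> 'a) m2 \<Rightarrow> ('a \<times> 'a) m2" where
  "madd (M2 a b c d) (M2 a' b' c' d') = M2 (eadd a a') (eadd b b') (eadd c c') (eadd d d')"
fun msub :: "('a::field \<times> 'a) m2 \<Rightarrow> ('a \<times> 'a) m2 \<Rightarrow> ('a \<times> 'a) m2" where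
  "msub (M2 a b c d) (M2 a' b' c' d') = M2 (esub a a') (esub b b') (esub c c') (esub d d')"
fun mconjT :: "('a::field \<times> 'a) m2 \<Rightarrow> ('a \<times> 'a) m2" where
  "mconjT (M2 a b c d) = M2 (econj a) (econj c) (econj b) (econj d)"
fun mtrace :: "('a::field \<times> 'a) m2 \<Rightarrow> 'a \<times> 'a" where
  "mtrace (M2 a b c d) = eadd a d"

definition mI :: "('a::field \<times> 'a) m2" where "mI = M2 e1 e0 e0 e1"
definition mZero :: "('a::field \<times> 'a) m2" where "mZero = M2 e0 e0 e0 e0"
definition mw :: "('a::field \<times> 'a) m2" where "mw = M2 e0 e1 e1 e0"

definition UG :: "'a::field \<Rightarrow> ('a \<times> 'a) m2 set" where
  "UG \<epsilon> = {g. mmul \<epsilon> (mmul \<epsilon> (mconjT g) mw) g = mw}"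

definition ULie :: "'a::field \<Rightarrow> ('a \<times> 'a) m2 set" where
  "ULie \<epsilon> = {Y. madd (mmul \<epsilon> (mconjT Y) mw) (mmul \<epsilon> mw Y) = mZero}"

definition center :: "'a::field \<Rightarrow> ('a \<times> 'a) m2 set" where
  "center \<epsilon> = UG \<epsilon> \<inter> {M2 l e0 e0 l | l. True}"

definition Kmax :: "('a::field \<Rightarrow> int) \<Rightarrow> 'a \<Rightarrow> ('a \<times> 'a) m2 set" where
  "Kmax \<nu> \<epsilon> = UG \<epsilon> \<inter> {M2 a b c d | a b c d.
      a \<in> pE \<nu> 0 \<and> b \<in> pE \<nu> 0 \<and> c \<in> pE \<nu> 0 \<and> d \<in> pE \<nu> 0}"

definition Ugrp :: "('a::field \<Rightarrow> int) \<Rightarrow> 'a \<Rightarrow> ('a \<times> 'a) m2 set" where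
  "Ugrp \<nu> \<epsilon> = {M2 e1 (esqrt b) e0 e1 | b. True} \<inter> Kmax \<nu> \<epsilon>"

definition kLie :: "('a::field \<Rightarrow> int) \<Rightarrow> 'a \<Rightarrow> int \<Rightarrow> ('a \<times> 'a) m2 set" where
  "kLie \<nu> \<epsilon> d = ULie \<epsilon> \<inter> {M2 a (esqrt b) (esqrt c) a' | a b c a'.
      a \<in> pE \<nu> (-d) \<and> a' \<in> pE \<nu> (-d) \<and> val_ge \<nu> b (-d) \<and> val_ge \<nu> c (-d)}"

definition Jgrp :: "('a::field \<Rightarrow> int) \<Rightarrow> 'a \<Rightarrow> int \<Rightarrow> ('a \<times> 'a) m2 set" where
  "Jgrp \<nu> \<epsilon> d = UG \<epsilon> \<inter> {M2 a b c a' | a b c a'.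
      esub a e1 \<in> pE \<nu> \<lceil>real_of_int d / 2\<rceil> \<and> esub a' e1 \<in> pE \<nu> \<lceil>real_of_int d / 2\<rceil> \<and>
      b \<in> pE \<nu> \<lceil>real_of_int d / 2\<rceil> \<and> c \<in> pE \<nu> \<lceil>real_of_int (d + 1) / 2\<rceil>}"

definition centralizerK :: "('a::field \<Rightarrow> int) \<Rightarrow> 'a \<Rightarrow> ('a \<times> 'a) m2 \<Rightarrow> ('a \<times> 'a) m2 set" where
  "centralizerK \<nu> \<epsilon> Y = {k \<in> Kmax \<nu> \<epsilon>. mmul \<epsilon> k Y = mmul \<epsilon> Y k}"

definition setmul :: "'a::field \<Rightarrow> ('a \<times> 'a) m2 set \<Rightarrow> ('a \<times> 'a) m2 set \<Rightarrow> ('a \<times> 'a) m2 set" where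
  "setmul \<epsilon> A B = {mmul \<epsilon> a b | a b. a \<in> A \<and> b \<in> B}"

definition add_char_cond :: "('a::field \<Rightarrow> int) \<Rightarrow> ('a \<times> 'a \<Rightarrow> complex) \<Rightarrow> bool" where
  "add_char_cond \<nu> \<psi> \<longleftrightarrow>
     (\<forall>x y. \<psi> (eadd x y) = \<psi> x * \<psi> y) \<and> (\<forall>x. cmod (\<psi> x) = 1) \<and>
     (\<forall>x \<in> pE \<nu> 1. \<psi> x = 1) \<and> (\<exists>x \<in> pE \<nu> 0. \<psi> x \<noteq> 1)"

definition PsiC :: "('a \<times> 'a \<Rightarrow> complex) \<Rightarrow> 'a::field \<Rightarrow> ('a \<times> 'a) m2 \<Rightarrow> ('a \<times> 'a) m2 \<Rightarrow> complex" where
  "PsiC \<psi> \<epsilon> Y k = \<psi> (mtrace (mmul \<epsilon> Y (msub k mI)))"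

end

theory Submission
  imports Defs
begin

lemma nl_mult: "nonarch_local_field \<nu> \<Longrightarrow> x \<noteq> 0 \<Longrightarrow> y \<noteq> 0 \<Longrightarrow> \<nu> (x*y) = \<nu> x + \<nu> y"
  unfolding nonarch_local_field_def by blast

lemma nl_ultra: "nonarch_local_field \<nu> \<Longrightarrow> x \<noteq> 0 \<Longrightarrow> y \<noteq> 0 \<Longrightarrow> x + y \<noteq> 0 \<Longrightarrow> \<nu> (x+y) \<ge> min (\<nu> x) (\<nu> y)"
  unfolding nonarch_local_field_def by blast

lemma nl_complete: fixes x :: "nat \<Rightarrow> 'a::field" assumes "nonarch_local_field \<nu>" "(\<forall>n. \<exists>N. \<forall>i\<ge>N. \<forall>j\<ge>N. val_ge \<nu> (x i - x j) n)" shows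
        "(\<exists>L. \<forall>n. \<exists>N. \<forall>i\<ge>N. val_ge \<nu> (x i - L) n)"
proof -
  have "\<forall>x :: nat \<Rightarrow> 'a. (\<forall>n. \<exists>N. \<forall>i\<ge>N. \<forall>j\<ge>N. val_ge \<nu> (x i - x j) n) \<longrightarrow>
        (\<exists>L. \<forall>n. \<exists>N. \<forall>i\<ge>N. val_ge \<nu> (x i - L) n)" using assms(1) unfolding nonarch_local_field_def by (elim conjE)
  then show ?thesis using assms(2) by blast
qed

lemma nl_one: "nonarch_local_field \<nu> \<Longrightarrow> \<nu> 1 = 0"
  using nl_mult[of \<nu> 1 1] by simp

lemma nl_m1: "nonarch_local_field \<nu> \<Longrightarrow> \<nu> (-1) = 0"
  using nl_mult[of \<nu> "-1" "-1"] nl_one[of \<nu>] by simp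

lemma nl_minus: "nonarch_local_field \<nu> \<Longrightarrow> \<nu> (-x) = \<nu> x"
proof (cases "x = 0")
  case False
  assume nl: "nonarch_local_field \<nu>"
  have "\<nu> ((-1) * x) = \<nu> (-1) + \<nu> x" using nl_mult[OF nl, of "-1" x] False by simp
  then show ?thesis using nl_m1[OF nl] by simp
qed simp

lemma nl_inverse: "nonarch_local_field \<nu> \<Longrightarrow> x \<noteq> 0 \<Longrightarrow> \<nu> (inverse x) = - \<nu> x"
  using nl_mult[of \<nu> x "inverse x"] nl_one[of \<nu>] by simp

lemma nl_divide: "nonarch_local_field \<nu> \<Longrightarrow> x \<noteq> 0 \<Longrightarrow> y \<noteq> 0 \<Longrightarrow> \<nu> (x / y) = \<nu> x - \<nu> y"
  using nl_mult[of \<nu> x "inverse y"] nl_inverse[of \<nu> y] by (simp add: divide_inverse)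

lemma val_ge_0[simp]: "val_ge \<nu> 0 n" by (simp add: val_ge_def)

lemma val_gt_iff: "val_gt \<nu> x n \<longleftrightarrow> val_ge \<nu> x (n+1)"
  by (auto simp: val_gt_def val_ge_def)

lemma val_ge_mono: "val_ge \<nu> x n \<Longrightarrow> m \<le> n \<Longrightarrow> val_ge \<nu> x m"
  by (auto simp: val_ge_def)

lemma val_ge_uminus[simp]: "nonarch_local_field \<nu> \<Longrightarrow> val_ge \<nu> (-x) n \<longleftrightarrow> val_ge \<nu> x n"
  by (simp add: val_ge_def nl_minus)

lemma val_ge_add: "nonarch_local_field \<nu> \<Longrightarrow> val_ge \<nu> x n \<Longrightarrow> val_ge \<nu> y n \<Longrightarrow> val_ge \<nu> (x+y) n"
  unfolding val_ge_def
  by (metis add.right_neutral add_0 min.bounded_iff nl_ultra order.trans)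

lemma val_ge_diff: "nonarch_local_field \<nu> \<Longrightarrow> val_ge \<nu> x n \<Longrightarrow> val_ge \<nu> y n \<Longrightarrow> val_ge \<nu> (x-y) n"
  using val_ge_add[of \<nu> x n "-y"] by simp

lemma val_ge_mult: "nonarch_local_field \<nu> \<Longrightarrow> val_ge \<nu> x m \<Longrightarrow> val_ge \<nu> y n \<Longrightarrow> val_ge \<nu> (x*y) (m+n)"
  unfolding val_ge_def using nl_mult[of \<nu> x y] by (cases "x=0"; cases "y=0") auto

lemma val_ge_mult': "nonarch_local_field \<nu> \<Longrightarrow> val_ge \<nu> x m \<Longrightarrow> val_ge \<nu> y n \<Longrightarrow> k \<le> m + n \<Longrightarrow> val_ge \<nu> (x*y) k"
  using val_ge_mult val_ge_mono by blast

lemma val_ge_divide: "nonarch_local_field \<nu> \<Longrightarrow> val_ge \<nu> x n \<Longrightarrow> y \<noteq> 0 \<Longrightarrow> val_ge \<nu> (x/y) (n - \<nu> y)"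
  unfolding val_ge_def using nl_divide[of \<nu> x y] by (cases "x=0") auto

lemma val_ge_all: "(\<And>n. val_ge \<nu> x n) \<Longrightarrow> x = 0"
  unfolding val_ge_def proof (rule ccontr)
  assume "\<And>n. x = 0 \<or> n \<le> \<nu> x" "x \<noteq> 0"
  then have "\<nu> x + 1 \<le> \<nu> x" by blast
  then show False by simp
qed

lemma val_ge_one: "nonarch_local_field \<nu> \<Longrightarrow> val_ge \<nu> 1 n \<longleftrightarrow> n \<le> 0"
  by (simp add: val_ge_def nl_one)

lemma val_ge_nz: "x \<noteq> 0 \<Longrightarrow> val_ge \<nu> x n \<longleftrightarrow> \<nu> x \<ge> n"
  by (simp add: val_ge_def)

lemma nl_strict: assumes nl: "nonarch_local_field \<nu>" and "x \<noteq> 0" "y \<noteq> 0" "\<nu> x < \<nu> y"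
  shows "x + y \<noteq> 0 \<and> \<nu> (x + y) = \<nu> x"
proof -
  have ne: "x + y \<noteq> 0"
  proof
    assume "x + y = 0" then have "x = - y" by (simp add: eq_neg_iff_add_eq_0)
    then show False using assms nl_minus[OF nl, of y] by simp
  qed
  have 1: "\<nu> (x+y) \<ge> \<nu> x" using nl_ultra[OF nl assms(2,3) ne] assms(4) by simp
  have "\<nu> ((x+y) + (-y)) \<ge> min (\<nu> (x+y)) (\<nu> (-y))"
    using nl_ultra[OF nl ne, of "-y"] assms by simp
  then have "\<nu> x \<ge> min (\<nu> (x+y)) (\<nu> y)" using nl_minus[OF nl] by simp
  then have "\<nu> (x+y) \<le> \<nu> x" using assms(4) by linarith
  with 1 ne show ?thesis by simp
qed

lemma unit_near_one: assumes nl: "nonarch_local_field \<nu>" and "val_ge \<nu> (s - 1) 1"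
  shows "s \<noteq> 0 \<and> \<nu> s = 0"
proof -
  have "s \<noteq> 0" using assms val_ge_uminus[OF nl, of 1] val_ge_one[OF nl] by (auto)
  moreover have "\<nu> s = 0"
  proof (cases "s = 1")
    case True then show ?thesis using nl_one[OF nl] by simp
  next
    case False
    then have "s - 1 \<noteq> 0" by simp
    then have v: "\<nu> (s - 1) \<ge> 1" using assms(2) by (simp add: val_ge_def)
    have "\<nu> (1 + (s - 1)) = \<nu> 1" using nl_strict[OF nl, of 1 "s - 1"] v nl_one[OF nl] \<open>s-1\<noteq>0\<close> by simp
    then show ?thesis using nl_one[OF nl] by simp
  qed
  ultimately show ?thesis by simp
qed


lemma two_facts: "residue_char_not_2 \<nu> \<Longrightarrow> (2::'a::field) \<noteq> 0 \<and> \<nu> (2::'a) = 0"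
  by (simp add: residue_char_not_2_def)

lemma hensel_sqrt:
  fixes c :: "'a::field"
  assumes nl: "nonarch_local_field \<nu>" and two: "residue_char_not_2 \<nu>"
    and n1: "n \<ge> 1" and c: "val_ge \<nu> (c - 1) n"
  shows "\<exists>s. s*s = c \<and> val_ge \<nu> (s - 1) n"
proof -
  have t2: "(2::'a) \<noteq> 0" "\<nu> (2::'a) = 0" using two_facts[OF two] by auto
  define f where "f = (\<lambda>t::'a. t - (t*t - c)/2)"
  define s where "s = (\<lambda>k::nat. (f ^^ k) 1)"
  have s0: "s 0 = 1" by (simp add: s_def)
  have sS: "s (Suc k) = s k - (s k * s k - c)/2" for k by (simp add: s_def f_def)
  have inv: "val_ge \<nu> (s k - 1) n \<and> val_ge \<nu> (s k * s k - c) (n + int k)" for k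
  proof (induction k)
    case 0
    have "1 - c = - (c - 1)" by simp
    then have "val_ge \<nu> (1 - c) n" using c val_ge_uminus[OF nl, of "c - 1"] by metis
    then show ?case using s0 by simp
  next
    case (Suc k)
    define t where "t = s k"
    define e where "e = t*t - c"
    have h1: "val_ge \<nu> (t - 1) n" "val_ge \<nu> e (n + int k)" using Suc by (auto simp: t_def e_def)
    have e2: "val_ge \<nu> (e/2) (n + int k)" using val_ge_divide[OF nl h1(2) t2(1)] t2 by simp
    have e4: "val_ge \<nu> (e/2/2) (n + int k)" using val_ge_divide[OF nl e2 t2(1)] t2 by simp
    have a: "s (Suc k) - 1 = (t - 1) - e/2" by (simp add: sS t_def e_def)
    have "val_ge \<nu> (s (Suc k) - 1) n"
      unfolding a by (rule val_ge_diff[OF nl h1(1)]) (rule val_ge_mono[OF e2], simp)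
    moreover have b: "s (Suc k) * s (Suc k) - c = e * (- (t - 1) + e/2/2)"
    proof -
      define h where "h = e/2"
      have he: "2*h = e" unfolding h_def using t2(1) by simp
      have hh: "(2*h)*(h/2) = h*h" using t2(1) by simp
      have x1: "(t - h)*(t - h) - c = (t*t - c) - 2*t*h + h*h" by (simp add: algebra_simps)
      have x2: "e * (- (t - 1) + h/2) = (2*h) * (- (t - 1)) + (2*h)*(h/2)"
        unfolding he[symmetric] by (simp add: distrib_left)
      have "(t - h)*(t - h) - c = e * (- (t - 1) + h/2)"
        unfolding x1 x2 hh e_def[symmetric] he[symmetric] using t2(1) by (simp add: algebra_simps)
      then show ?thesis by (simp add: sS t_def[symmetric] e_def[symmetric] h_def)
    qed
    have A: "val_ge \<nu> (- (t - 1)) 1" using val_ge_mono[OF h1(1) n1] by (simp only: val_ge_uminus[OF nl])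
    have B: "val_ge \<nu> (e/2/2) 1" using val_ge_mono[OF e4] n1 by simp
    have "val_ge \<nu> (- (t - 1) + e/2/2) 1" using val_ge_add[OF nl A B] .
    then have "val_ge \<nu> (e * (- (t - 1) + e/2/2)) (n + int k + 1)"
      by (rule val_ge_mult[OF nl h1(2)])
    then have "val_ge \<nu> (s (Suc k) * s (Suc k) - c) (n + int (Suc k))"
      unfolding b by (simp add: ac_simps)
    ultimately show ?case by simp
  qed
  have step: "val_ge \<nu> (s (Suc k) - s k) (n + int k)" for k
  proof -
    have "s (Suc k) - s k = - ((s k * s k - c)/2)" by (simp add: sS)
    then show ?thesis using val_ge_divide[OF nl conjunct2[OF inv[of k]] t2(1)] t2 val_ge_uminus[OF nl] by simp
  qed
  have cau: "val_ge \<nu> (s i - s N) (n + int N)" if "N \<le> i" for i N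
    using that
  proof (induction i rule: dec_induct)
    case base then show ?case by simp
  next
    case (step i)
    have "s (Suc i) - s N = (s (Suc i) - s i) + (s i - s N)" by simp
    moreover have "val_ge \<nu> (s (Suc i) - s i) (n + int N)"
      using val_ge_mono[OF \<open>val_ge \<nu> (s (Suc i) - s i) (n + int i)\<close>] step.hyps by simp
    ultimately show ?case using val_ge_add[OF nl] step.IH by metis
  qed
  have "\<forall>M. \<exists>N. \<forall>i\<ge>N. \<forall>j\<ge>N. val_ge \<nu> (s i - s j) M"
  proof
    fix M :: int
    have "\<forall>i\<ge>nat M. \<forall>j\<ge>nat M. val_ge \<nu> (s i - s j) M"
    proof (intro allI impI)
      fix i j assume "nat M \<le> i" "nat M \<le> j"
      have "s i - s j = (s i - s (nat M)) - (s j - s (nat M))" by simp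
      moreover have "val_ge \<nu> (s i - s (nat M)) M" "val_ge \<nu> (s j - s (nat M)) M"
        using cau[OF \<open>nat M \<le> i\<close>] cau[OF \<open>nat M \<le> j\<close>] n1 val_ge_mono by fastforce+
      ultimately show "val_ge \<nu> (s i - s j) M" using val_ge_diff[OF nl] by metis
    qed
    then show "\<exists>N. \<forall>i\<ge>N. \<forall>j\<ge>N. val_ge \<nu> (s i - s j) M" by blast
  qed
  from nl_complete[OF nl this] obtain L where L: "\<And>M. \<exists>N. \<forall>i\<ge>N. val_ge \<nu> (s i - L) M" by blast
  have close: "\<exists>i. val_ge \<nu> (s i - L) M \<and> val_ge \<nu> (s i - 1) n \<and> val_ge \<nu> (s i * s i - c) M" for M
  proof -
    obtain N where N: "\<forall>i\<ge>N. val_ge \<nu> (s i - L) M" using L by blast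
    define i where "i = max N (nat M)"
    have "val_ge \<nu> (s i * s i - c) M" using n1
      by (intro val_ge_mono[OF conjunct2[OF inv[of i]]]) (simp add: i_def)
    moreover have "val_ge \<nu> (s i - L) M" using N by (simp add: i_def)
    ultimately show ?thesis using inv[of i] by blast
  qed
  have "L * L = c"
  proof -
    have "val_ge \<nu> (L*L - c) M" for M
    proof -
      obtain i where i: "val_ge \<nu> (s i - L) (max M 0)" "val_ge \<nu> (s i - 1) n" "val_ge \<nu> (s i * s i - c) M"
        using close[of "max M 0"] val_ge_mono by (metis max.cobounded1)
      have si: "val_ge \<nu> (s i) 0"
      proof -
        have "s i = (s i - 1) + 1" by simp
        then show ?thesis using val_ge_add[OF nl, of "s i - 1" 0 1] val_ge_mono[OF i(2)] n1 val_ge_one[OF nl] by force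
      qed
      have Li: "val_ge \<nu> (L - s i) (max M 0)" using i(1) val_ge_uminus[OF nl, of "s i - L"] by simp
      have Ls: "val_ge \<nu> (L + s i) 0"
      proof -
        have "L + s i = (L - s i) + (s i + s i)" by simp
        then show ?thesis using val_ge_add[OF nl] val_ge_mono[OF Li] si by (metis max.cobounded2)
      qed
      have eq: "L*L - c = (L - s i) * (L + s i) + (s i * s i - c)" by (simp add: algebra_simps)
      have "val_ge \<nu> ((L - s i) * (L + s i)) M" using val_ge_mult'[OF nl Li Ls] by simp
      then show ?thesis unfolding eq using val_ge_add[OF nl _ i(3)] by blast
    qed
    then show ?thesis using val_ge_all[of \<nu> "L*L - c"] by simp
  qed
  moreover have "val_ge \<nu> (L - 1) n"
  proof -
    obtain i where i: "val_ge \<nu> (s i - L) n" "val_ge \<nu> (s i - 1) n" using close by blast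
    have "L - 1 = -(s i - L) + (s i - 1)" by simp
    then show ?thesis using val_ge_add[OF nl] i val_ge_uminus[OF nl] by metis
  qed
  ultimately show ?thesis by blast
qed


lemma norm1_integral:
  fixes x y :: "'a::field"
  assumes nl: "nonarch_local_field \<nu>" and two: "residue_char_not_2 \<nu>"
    and e0: "\<epsilon> \<noteq> 0" and ev: "\<nu> \<epsilon> = 0" and ns: "\<not> (\<exists>y. y * y = \<epsilon>)"
    and eq: "x*x - \<epsilon>*y*y = 1"
  shows "val_ge \<nu> x 0 \<and> val_ge \<nu> y 0"
proof (cases "y = 0")
  case True
  then have "x*x = 1" using eq by simp
  moreover have xn: "x \<noteq> 0" using \<open>x*x = 1\<close> by auto
  ultimately have "\<nu> x + \<nu> x = 0" using nl_mult[OF nl xn xn] nl_one[OF nl] by simp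
  then show ?thesis using True by (simp add: val_ge_def)
next
  case yn: False
  show ?thesis
  proof (cases "x = 0")
    case True
    then have "(-\<epsilon>)*(y*y) = 1" using eq by (simp add: algebra_simps)
    then have "\<nu> (-\<epsilon>) + (\<nu> y + \<nu> y) = 0" using nl_mult[OF nl, of "-\<epsilon>" "y*y"] nl_mult[OF nl yn yn] nl_one[OF nl] e0 yn by auto
    then show ?thesis using True nl_minus[OF nl, of \<epsilon>] ev by (simp add: val_ge_def)
  next
    case xn: False
    define A where "A = x*x"
    define B where "B = -(\<epsilon>*y*y)"
    have An: "A \<noteq> 0" "\<nu> A = \<nu> x + \<nu> x" using nl_mult[OF nl xn xn] xn by (auto simp: A_def)
    have Bn: "B \<noteq> 0" "\<nu> B = \<nu> y + \<nu> y"
    proof -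
      have "\<epsilon>*y*y = \<epsilon>*(y*y)" by simp
      moreover have "\<nu> (\<epsilon>*(y*y)) = \<nu> y + \<nu> y" using nl_mult[OF nl e0, of "y*y"] nl_mult[OF nl yn yn] ev yn by simp
      ultimately have "\<nu> (\<epsilon>*y*y) = \<nu> y + \<nu> y" by metis
      then show "B \<noteq> 0" "\<nu> B = \<nu> y + \<nu> y" using e0 yn by (auto simp: B_def nl_minus[OF nl])
    qed
    have AB: "A + B = 1" using eq by (simp add: A_def B_def)
    show ?thesis
    proof (cases "\<nu> x < \<nu> y")
      case True
      then have "\<nu> (A + B) = \<nu> A" using nl_strict[OF nl An(1) Bn(1)] An Bn by simp
      then show ?thesis using AB nl_one[OF nl] An Bn True by (simp add: val_ge_def)
    next
      case False
      show ?thesis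
      proof (cases "\<nu> y < \<nu> x")
        case True
        then have "\<nu> (B + A) = \<nu> B" using nl_strict[OF nl Bn(1) An(1)] An Bn by simp
        then show ?thesis using AB nl_one[OF nl] An Bn True by (simp add: val_ge_def add.commute)
      next
        case False2: False
        then have mm: "\<nu> x = \<nu> y" using False by simp
        show ?thesis
        proof (rule ccontr)
          assume neg: "\<not> ?thesis"
          then have m: "\<nu> x < 0" using mm xn yn by (auto simp: val_ge_def)
          define c where "c = 1 - 1/(x*x)"
          have "\<nu> (1/(x*x)) = - (\<nu> x + \<nu> x)"
            using nl_divide[OF nl, of 1 "x*x"] nl_one[OF nl] nl_mult[OF nl xn xn] xn by simp
          then have "val_ge \<nu> (1/(x*x)) 1" using m by (simp add: val_ge_def)
          then have "val_ge \<nu> (c - 1) 1" unfolding c_def using val_ge_uminus[OF nl, of "1/(x*x)"] by simp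
          from hensel_sqrt[OF nl two order.refl this] obtain s where s: "s*s = c" by blast
          have "(x/y*s)*(x/y*s) = (x/y)*(x/y)*c" using s by (simp add: algebra_simps)
          also have "\<dots> = (x*x - 1)/(y*y)" unfolding c_def using xn yn by (simp add: field_simps)
          also have "\<dots> = \<epsilon>" using eq yn by (simp add: field_simps)
          finally show False using ns by blast
        qed
      qed
    qed
  qed
qed


lemmas Es = eadd_def esub_def emul_def econj_def e0_def e1_def esqrt_def

lemma UG_coord:
  assumes "(2::'a::field) \<noteq> 0"
  shows "M2 (a1,a2) (b1,b2) (c1,c2) (d1,d2) \<in> UG (\<epsilon>::'a) \<longleftrightarrow>
    (a1*c1 = \<epsilon>*a2*c2 \<and> b1*d1 = \<epsilon>*b2*d2 \<and> c1*b1 - \<epsilon>*c2*b2 + a1*d1 - \<epsilon>*a2*d2 = 1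
     \<and> c1*b2 - c2*b1 + a1*d2 - a2*d1 = 0)"
proof -
  have "M2 (a1,a2) (b1,b2) (c1,c2) (d1,d2) \<in> UG \<epsilon> \<longleftrightarrow>
    (2*(a1*c1 - \<epsilon>*a2*c2) = 0 \<and> 2*(b1*d1 - \<epsilon>*b2*d2) = 0 \<and> c1*b1 - \<epsilon>*c2*b2 + a1*d1 - \<epsilon>*a2*d2 = 1
     \<and> c1*b2 - c2*b1 + a1*d2 - a2*d1 = 0)"
    unfolding UG_def mw_def by (simp add: Es algebra_simps) (auto simp: algebra_simps)
  then show ?thesis using assms by simp
qed


lemma ceil_half: "\<lceil>real_of_int d / 2\<rceil> = (d + 1) div 2"
proof -
  obtain k where "d = 2*k \<or> d = 2*k + 1" by (metis oddE evenE)
  then show ?thesis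
  proof
    assume d: "d = 2*k"
    have "real_of_int d / 2 = of_int k" by (simp add: d)
    then show ?thesis by (simp add: d)
  next
    assume d: "d = 2*k+1"
    have "\<lceil>real_of_int d / 2\<rceil> = k + 1"
      by (rule ceiling_unique) (simp_all add: d)
    then show ?thesis by (simp add: d)
  qed
qed

locale L5 =
  fixes \<nu> :: "'a::field \<Rightarrow> int" and \<epsilon> :: 'a and d :: int and z u v :: 'a
  assumes nl: "nonarch_local_field \<nu>" and two: "residue_char_not_2 \<nu>"
    and e0: "\<epsilon> \<noteq> 0" and ev: "\<nu> \<epsilon> = 0" and ns: "\<not> (\<exists>y. y * y = \<epsilon>)"
    and dpos: "d > 0"
    and vz: "val_ge \<nu> z (1 - (d+1) div 2)" and vv: "val_ge \<nu> v (1 - (d+1) div 2)"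
    and un: "u \<noteq> 0" and vu: "\<nu> u = - d"
begin

definition "m = (d+1) div 2"
definition "m' = (d+2) div 2"

lemma m_facts: "m \<ge> 1" "m' \<ge> m" "d - m + 1 = m'" "m' \<ge> 1"
  unfolding m_def m'_def using dpos by presburger+

lemma ceil_m: "\<lceil>real_of_int d / 2\<rceil> = m" "\<lceil>real_of_int (d+1) / 2\<rceil> = m'"
  unfolding m_def m'_def using ceil_half[of d] ceil_half[of "d+1"] by (simp_all add: add.assoc)

lemma t2: "(2::'a) \<noteq> 0" using two_facts[OF two] by simp

lemma vg_add[intro]: "val_ge \<nu> x n \<Longrightarrow> val_ge \<nu> y n \<Longrightarrow> val_ge \<nu> (x+y) n"
  using val_ge_add[OF nl] .
lemma vg_diff[intro]: "val_ge \<nu> x n \<Longrightarrow> val_ge \<nu> y n \<Longrightarrow> val_ge \<nu> (x-y) n"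
  using val_ge_diff[OF nl] .
lemma vg_uminus[simp]: "val_ge \<nu> (-x) n \<longleftrightarrow> val_ge \<nu> x n"
  using val_ge_uminus[OF nl] .
lemma vg_mult_l[intro]: "val_ge \<nu> x 0 \<Longrightarrow> val_ge \<nu> y n \<Longrightarrow> val_ge \<nu> (x*y) n"
  using val_ge_mult[OF nl, of x 0 y n] by simp
lemma vg_mult_r[intro]: "val_ge \<nu> x n \<Longrightarrow> val_ge \<nu> y 0 \<Longrightarrow> val_ge \<nu> (x*y) n"
  using val_ge_mult[OF nl, of x n y 0] by simp
lemma vg_eps[simp]: "val_ge \<nu> \<epsilon> 0" using ev by (simp add: val_ge_def)
lemma vg_one[simp]: "val_ge \<nu> 1 0" using val_ge_one[OF nl] by simp
lemma vg_mono: "val_ge \<nu> x n \<Longrightarrow> k \<le> n \<Longrightarrow> val_ge \<nu> x k" using val_ge_mono .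
lemma vg_mul: "val_ge \<nu> x i \<Longrightarrow> val_ge \<nu> y j \<Longrightarrow> k \<le> i + j \<Longrightarrow> val_ge \<nu> (x*y) k"
  using val_ge_mult'[OF nl] .
lemma vg_near1: "val_ge \<nu> (x - 1) n \<Longrightarrow> n \<ge> 0 \<Longrightarrow> val_ge \<nu> x 0"
proof -
  assume a: "val_ge \<nu> (x - 1) n" "n \<ge> 0"
  have "x = (x - 1) + 1" by simp
  then show ?thesis using vg_add[OF vg_mono[OF a(1) a(2)] vg_one] by metis
qed

lemma J_iff: "M2 (a1,a2) (b1,b2) (c1,c2) (d1,d2) \<in> Jgrp \<nu> \<epsilon> d \<longleftrightarrow>
   M2 (a1,a2) (b1,b2) (c1,c2) (d1,d2) \<in> UG \<epsilon> \<and> val_ge \<nu> (a1 - 1) m \<and> val_ge \<nu> a2 m \<and>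
   val_ge \<nu> (d1 - 1) m \<and> val_ge \<nu> d2 m \<and> val_ge \<nu> b1 m \<and> val_ge \<nu> b2 m \<and>
   val_ge \<nu> c1 m' \<and> val_ge \<nu> c2 m'"
  unfolding Jgrp_def ceil_m by (auto simp: pE_def Es)

lemma K_iff: "M2 (a1,a2) (b1,b2) (c1,c2) (d1,d2) \<in> Kmax \<nu> \<epsilon> \<longleftrightarrow>
   M2 (a1,a2) (b1,b2) (c1,c2) (d1,d2) \<in> UG \<epsilon> \<and> val_ge \<nu> a1 0 \<and> val_ge \<nu> a2 0 \<and>
   val_ge \<nu> d1 0 \<and> val_ge \<nu> d2 0 \<and> val_ge \<nu> b1 0 \<and> val_ge \<nu> b2 0 \<and>
   val_ge \<nu> c1 0 \<and> val_ge \<nu> c2 0"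
  unfolding Kmax_def by (auto simp: pE_def)

lemma UGc: "M2 (a1,a2) (b1,b2) (c1,c2) (d1,d2) \<in> UG (\<epsilon>::'a) \<longleftrightarrow>
    (a1*c1 = \<epsilon>*a2*c2 \<and> b1*d1 = \<epsilon>*b2*d2 \<and> c1*b1 - \<epsilon>*c2*b2 + a1*d1 - \<epsilon>*a2*d2 = 1
     \<and> c1*b2 - c2*b1 + a1*d2 - a2*d1 = 0)"
  using UG_coord[OF t2] .

end


context L5 begin

abbreviation "X \<equiv> M2 (esqrt z) (esqrt u) (esqrt v) (esqrt z)"
abbreviation "Xu \<equiv> M2 e0 (esqrt u) e0 (e0::'a\<times>'a)"

lemma part1:
  assumes psi: "add_char_cond \<nu> \<psi>" and k: "k \<in> Jgrp \<nu> \<epsilon> d"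
  shows "PsiC \<psi> \<epsilon> X k = PsiC \<psi> \<epsilon> Xu k"
proof -
  obtain a1 a2 b1 b2 c1 c2 d1 d2 where kk: "k = M2 (a1,a2) (b1,b2) (c1,c2) (d1,d2)"
    by (metis m2.exhaust prod.exhaust)
  have h: "val_ge \<nu> (a1 - 1) m" "val_ge \<nu> a2 m" "val_ge \<nu> (d1 - 1) m" "val_ge \<nu> d2 m"
     "val_ge \<nu> b1 m" "val_ge \<nu> b2 m"
    using k unfolding kk J_iff by auto
  have z1: "val_ge \<nu> z (1 - m)" and v1: "val_ge \<nu> v (1 - m)" using vz vv by (simp_all add: m_def)
  define w where "w = (\<epsilon>*z*a2 + \<epsilon>*v*b2 + \<epsilon>*z*d2, z*(a1-1) + v*b1 + z*(d1-1))"
  have tr: "mtrace (mmul \<epsilon> X (msub k mI)) = eadd (mtrace (mmul \<epsilon> Xu (msub k mI))) w"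
    unfolding kk w_def mI_def by (simp add: Es algebra_simps)
  have l1: "val_ge \<nu> (z*x) 1" if "val_ge \<nu> x m" for x using vg_mul[OF z1 that] by simp
  have l2: "val_ge \<nu> (v*x) 1" if "val_ge \<nu> x m" for x using vg_mul[OF v1 that] by simp
  have w1: "w \<in> pE \<nu> 1" unfolding w_def pE_def
    using l1[OF h(2)] l1[OF h(4)] l2[OF h(6)] l1[OF h(1)] l2[OF h(5)] l1[OF h(3)]
    by (simp add: mult.assoc) (blast intro: vg_eps)
  have "\<psi> w = 1" using psi w1 unfolding add_char_cond_def by blast
  moreover have "\<psi> (eadd t w) = \<psi> t * \<psi> w" for t using psi unfolding add_char_cond_def by blast
  ultimately show ?thesis unfolding PsiC_def tr by simp
qed

lemma J_mult:
  assumes j1: "j1 \<in> Jgrp \<nu> \<epsilon> d" and j2: "j2 \<in> Jgrp \<nu> \<epsilon> d" and UGm: "mmul \<epsilon> j1 j2 \<in> UG \<epsilon>"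
  shows "mmul \<epsilon> j1 j2 \<in> Jgrp \<nu> \<epsilon> d"
proof -
  obtain a1 a2 b1 b2 c1 c2 d1 d2 where kk: "j1 = M2 (a1,a2) (b1,b2) (c1,c2) (d1,d2)"
    by (metis m2.exhaust prod.exhaust)
  obtain A1 A2 B1 B2 C1 C2 D1 D2 where kk2: "j2 = M2 (A1,A2) (B1,B2) (C1,C2) (D1,D2)"
    by (metis m2.exhaust prod.exhaust)
  have h: "val_ge \<nu> (a1 - 1) m" "val_ge \<nu> a2 m" "val_ge \<nu> (d1 - 1) m" "val_ge \<nu> d2 m"
     "val_ge \<nu> b1 m" "val_ge \<nu> b2 m" "val_ge \<nu> c1 m'" "val_ge \<nu> c2 m'"
    using j1 unfolding kk J_iff by auto
  have H: "val_ge \<nu> (A1 - 1) m" "val_ge \<nu> A2 m" "val_ge \<nu> (D1 - 1) m" "val_ge \<nu> D2 m"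
     "val_ge \<nu> B1 m" "val_ge \<nu> B2 m" "val_ge \<nu> C1 m'" "val_ge \<nu> C2 m'"
    using j2 unfolding kk2 J_iff by auto
  have mm: "0 \<le> m" "m \<le> m'" using m_facts by auto
  have c: "val_ge \<nu> c1 m" "val_ge \<nu> c2 m" "val_ge \<nu> C1 m" "val_ge \<nu> C2 m"
    using h(7,8) H(7,8) vg_mono mm by blast+
  have i: "val_ge \<nu> x 0" if "val_ge \<nu> x m" for x using vg_mono[OF that mm(1)] .
  have i': "val_ge \<nu> x 0" if "val_ge \<nu> x m'" for x using vg_mono[OF that] mm by auto
  have one: "val_ge \<nu> x 0" if "val_ge \<nu> (x - 1) m" for x using vg_near1[OF that mm(1)] .
  note I = i[OF h(2)] i[OF h(4)] i[OF h(5)] i[OF h(6)] i'[OF h(7)] i'[OF h(8)]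
      i[OF H(2)] i[OF H(4)] i[OF H(5)] i[OF H(6)] i'[OF H(7)] i'[OF H(8)]
      one[OF h(1)] one[OF h(3)] one[OF H(1)] one[OF H(3)]
      i[OF h(1)] i[OF h(3)] i[OF H(1)] i[OF H(3)]
  have p11: "a1*A1 - 1 = (a1 - 1)*(A1 - 1) + (a1 - 1) + (A1 - 1)" by (simp add: algebra_simps)
  have p22: "d1*D1 - 1 = (d1 - 1)*(D1 - 1) + (d1 - 1) + (D1 - 1)" by (simp add: algebra_simps)
  have e1: "val_ge \<nu> (a1*A1 + \<epsilon>*a2*A2 + (b1*C1 + \<epsilon>*b2*C2) - 1) m"
  proof -
    have eq: "a1*A1 + \<epsilon>*a2*A2 + (b1*C1 + \<epsilon>*b2*C2) - 1 = (a1*A1 - 1) + \<epsilon>*a2*A2 + (b1*C1 + \<epsilon>*b2*C2)"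
      by simp
    have "val_ge \<nu> ((a1 - 1)*(A1 - 1) + (a1 - 1) + (A1 - 1) + \<epsilon>*a2*A2 + (b1*C1 + \<epsilon>*b2*C2)) m"
      using h H I c by (blast intro: vg_eps)
    then show ?thesis unfolding eq p11 .
  qed
  have e22: "val_ge \<nu> (c1*B1 + \<epsilon>*c2*B2 + (d1*D1 + \<epsilon>*d2*D2) - 1) m"
  proof -
    have eq: "c1*B1 + \<epsilon>*c2*B2 + (d1*D1 + \<epsilon>*d2*D2) - 1 = (d1*D1 - 1) + c1*B1 + \<epsilon>*c2*B2 + \<epsilon>*d2*D2"
      by simp
    have "val_ge \<nu> ((d1 - 1)*(D1 - 1) + (d1 - 1) + (D1 - 1) + c1*B1 + \<epsilon>*c2*B2 + \<epsilon>*d2*D2) m"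
      using h H I c by (blast intro: vg_eps)
    then show ?thesis unfolding eq p22 .
  qed
  note F = h H I c
  have f2: "val_ge \<nu> (a1 * A2 + a2 * A1 + (b1 * C2 + b2 * C1)) m" by (blast intro: vg_eps F)
  have f3: "val_ge \<nu> (a1 * B1 + \<epsilon> * a2 * B2 + (b1 * D1 + \<epsilon> * b2 * D2)) m" by (blast intro: vg_eps F)
  have f4: "val_ge \<nu> (a1 * B2 + a2 * B1 + (b1 * D2 + b2 * D1)) m" by (blast intro: vg_eps F)
  have f5: "val_ge \<nu> (c1 * A1 + \<epsilon> * c2 * A2 + (d1 * C1 + \<epsilon> * d2 * C2)) m'" by (blast intro: vg_eps F)
  have f6: "val_ge \<nu> (c1 * A2 + c2 * A1 + (d1 * C2 + d2 * C1)) m'" by (blast intro: vg_eps F)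
  have f8: "val_ge \<nu> (c1 * B2 + c2 * B1 + (d1 * D2 + d2 * D1)) m" by (blast intro: vg_eps F)
  show ?thesis using UGm unfolding kk kk2 by (simp add: Es J_iff e1 e22 f2 f3 f4 f5 f6 f8)
qed

end


lemma mmul_assoc: "mmul \<epsilon> (mmul \<epsilon> A B) C = mmul \<epsilon> A (mmul \<epsilon> B C)"
  by (cases A; cases B; cases C) (simp add: Es algebra_simps)

lemma mconjT_mmul: "mconjT (mmul \<epsilon> A B) = mmul \<epsilon> (mconjT B) (mconjT A)"
  by (cases A; cases B) (simp add: Es algebra_simps)

lemma UG_mult: "A \<in> UG \<epsilon> \<Longrightarrow> B \<in> UG \<epsilon> \<Longrightarrow> mmul \<epsilon> A B \<in> UG \<epsilon>"
  unfolding UG_def by (simp add: mconjT_mmul mmul_assoc[symmetric])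
    (metis mmul_assoc)

lemma center_iff: fixes \<epsilon> :: "'a::field" assumes "(2::'a) \<noteq> 0"
  shows "g \<in> center \<epsilon> \<longleftrightarrow> (\<exists>x y. g = M2 (x,y) e0 e0 (x,y) \<and> x*x - \<epsilon>*y*y = 1)"
  unfolding center_def using UG_coord[OF assms] by (auto simp: Es)


context L5 begin

lemma center_int: "M2 (x,y) e0 e0 (x,y) \<in> center \<epsilon> \<Longrightarrow> val_ge \<nu> x 0 \<and> val_ge \<nu> y 0 \<and> x*x - \<epsilon>*y*y = 1"
  using center_iff[OF t2] norm1_integral[OF nl two e0 ev ns] by (auto simp: Es)

lemma center_UG: "g \<in> center \<epsilon> \<Longrightarrow> g \<in> UG \<epsilon>" by (simp add: center_def)

lemma Ugrp_iff: "n \<in> Ugrp \<nu> \<epsilon> \<longleftrightarrow> (\<exists>b. n = M2 e1 (esqrt b) e0 e1 \<and> val_ge \<nu> b 0)"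
  unfolding Ugrp_def by (auto simp: Es K_iff UGc)

lemma T0_eq: "centralizerK \<nu> \<epsilon> Xu = setmul \<epsilon> (center \<epsilon>) (Ugrp \<nu> \<epsilon>)"
proof
  show "centralizerK \<nu> \<epsilon> Xu \<subseteq> setmul \<epsilon> (center \<epsilon>) (Ugrp \<nu> \<epsilon>)"
  proof
    fix k assume k: "k \<in> centralizerK \<nu> \<epsilon> Xu"
    obtain a1 a2 b1 b2 c1 c2 d1 d2 where kk: "k = M2 (a1,a2) (b1,b2) (c1,c2) (d1,d2)"
      by (metis m2.exhaust prod.exhaust)
    have kK: "k \<in> Kmax \<nu> \<epsilon>" and comm: "mmul \<epsilon> k Xu = mmul \<epsilon> Xu k"
      using k by (auto simp: centralizerK_def)
    have cd: "c1 = 0 \<and> c2 = 0 \<and> d1 = a1 \<and> d2 = a2" using comm un e0 by (simp add: kk Es)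
    have ug: "b1*a1 = \<epsilon>*b2*a2" "a1*a1 - \<epsilon>*a2*a2 = 1" and I: "val_ge \<nu> a1 0" "val_ge \<nu> a2 0"
       "val_ge \<nu> b1 0" "val_ge \<nu> b2 0"
      using kK unfolding kk K_iff UGc using cd by auto
    define \<beta> where "\<beta> = a1*b2 - a2*b1"
    have lam: "M2 (a1,a2) e0 e0 (a1,a2) \<in> center \<epsilon>" using center_iff[OF t2] ug by blast
    have n: "M2 e1 (esqrt \<beta>) e0 e1 \<in> Ugrp \<nu> \<epsilon>" unfolding Ugrp_iff \<beta>_def using I by blast
    have "k = mmul \<epsilon> (M2 (a1,a2) e0 e0 (a1,a2)) (M2 e1 (esqrt \<beta>) e0 e1)"
    proof -
      have "\<epsilon>*a2*(a1*b2 - a2*b1) = b1" using ug by algebra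
      moreover have "a1*(a1*b2 - a2*b1) = b2" using ug by algebra
      ultimately show ?thesis using cd by (simp add: kk Es \<beta>_def)
    qed
    then show "k \<in> setmul \<epsilon> (center \<epsilon>) (Ugrp \<nu> \<epsilon>)" unfolding setmul_def using lam n by blast
  qed
next
  show "setmul \<epsilon> (center \<epsilon>) (Ugrp \<nu> \<epsilon>) \<subseteq> centralizerK \<nu> \<epsilon> Xu"
  proof
    fix g assume "g \<in> setmul \<epsilon> (center \<epsilon>) (Ugrp \<nu> \<epsilon>)"
    then obtain l n where l: "l \<in> center \<epsilon>" and n: "n \<in> Ugrp \<nu> \<epsilon>" and g: "g = mmul \<epsilon> l n"
      unfolding setmul_def by blast
    obtain x y where lx: "l = M2 (x,y) e0 e0 (x,y)" using l center_iff[OF t2] by blast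
    obtain b where nb: "n = M2 e1 (esqrt b) e0 e1" and b: "val_ge \<nu> b 0" using n Ugrp_iff by blast
    have xy: "val_ge \<nu> x 0" "val_ge \<nu> y 0" using center_int l lx by auto
    have "g \<in> UG \<epsilon>" unfolding g by (rule UG_mult[OF center_UG[OF l]]) (use n in \<open>simp add: Ugrp_def Kmax_def\<close>)
    then have "g \<in> Kmax \<nu> \<epsilon>" unfolding g lx nb using xy b by (simp add: Es K_iff) (blast intro: vg_eps)
    moreover have "mmul \<epsilon> g Xu = mmul \<epsilon> Xu g" unfolding g lx nb by (simp add: Es algebra_simps)
    ultimately show "g \<in> centralizerK \<nu> \<epsilon> Xu" by (simp add: centralizerK_def)
  qed
qed

end


context L5 begin

lemma r_facts: "(v/u) * u = v" "val_ge \<nu> (v/u) m'"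
proof -
  show "(v/u) * u = v" using un by simp
  have "val_ge \<nu> (v/u) (1 - m - \<nu> u)" using val_ge_divide[OF nl _ un] vv by (simp add: m_def)
  then show "val_ge \<nu> (v/u) m'" using vu m_facts(3) by (simp add: algebra_simps)
qed

lemma J_explicit:
  assumes "x*w - \<epsilon>*g*b = 1" "val_ge \<nu> (x - 1) m" "val_ge \<nu> (w - 1) m" "val_ge \<nu> b m" "val_ge \<nu> g m'"
  shows "M2 (x,0) (0,b) (0,g) (w,0) \<in> Jgrp \<nu> \<epsilon> d"
  unfolding J_iff UGc using assms by simp

lemma T1a:
  assumes t: "t \<in> centralizerK \<nu> \<epsilon> X"
  shows "\<exists>g \<in> setmul \<epsilon> (center \<epsilon>) (Ugrp \<nu> \<epsilon>). \<exists>j \<in> Jgrp \<nu> \<epsilon> d. t = mmul \<epsilon> g j"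
proof -
  obtain a1 a2 b1 b2 c1 c2 d1 d2 where kk: "t = M2 (a1,a2) (b1,b2) (c1,c2) (d1,d2)"
    by (metis m2.exhaust prod.exhaust)
  have kK: "t \<in> Kmax \<nu> \<epsilon>" and comm: "mmul \<epsilon> t X = mmul \<epsilon> X t"
    using t by (auto simp: centralizerK_def)
  define r where "r = v/u"
  have r: "r * u = v" "val_ge \<nu> r m'" using r_facts by (simp_all add: r_def)
  have cm: "d1 = a1 \<and> d2 = a2 \<and> c1 = r*b1 \<and> c2 = r*b2"
  proof -
    have "\<epsilon>*b2*v = \<epsilon>*u*c2 \<and> b1*v = u*c1 \<and> \<epsilon>*a2*u = \<epsilon>*u*d2 \<and> a1*u = u*d1"
      using comm by (simp add: kk Es)
    then have h: "b2*v = u*c2" "b1*v = u*c1" "a2 = d2" "a1 = d1" using un e0 by auto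
    have "c2 = r*b2" using h(1) un unfolding r_def by (simp add: field_simps)
    moreover have "c1 = r*b1" using h(2) un unfolding r_def by (simp add: field_simps)
    ultimately show ?thesis using h by simp
  qed
  have ug: "b1*a1 = \<epsilon>*b2*a2" "r*b1*b1 - \<epsilon>*(r*b2)*b2 + a1*a1 - \<epsilon>*a2*a2 = 1"
    and I: "val_ge \<nu> a1 0" "val_ge \<nu> a2 0" "val_ge \<nu> b1 0" "val_ge \<nu> b2 0"
    using kK unfolding kk K_iff UGc using cm by auto
  define N where "N = a1*a1 - \<epsilon>*a2*a2"
  have N1: "N - 1 = - (r*(b1*b1 - \<epsilon>*b2*b2))" using ug(2) unfolding N_def by (simp add: algebra_simps)
  have "val_ge \<nu> (r*(b1*b1 - \<epsilon>*b2*b2)) m'" using r(2) I by (blast intro: vg_eps)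
  then have "val_ge \<nu> (N - 1) m'" unfolding N1 by simp
  from hensel_sqrt[OF nl two m_facts(4) this] obtain s where s: "s*s = N" "val_ge \<nu> (s - 1) m'" by blast
  have "val_ge \<nu> (s - 1) 1" using vg_mono[OF s(2) m_facts(4)] .
  from unit_near_one[OF nl this] have sn: "s \<noteq> 0" "\<nu> s = 0" by auto
  define p where "p = a1/s"
  define q where "q = a2/s"
  define \<beta> where "\<beta> = (a1*b2 - a2*b1)/s"
  define \<gamma> where "\<gamma> = r*\<beta>"
  have pq: "p*p - \<epsilon>*q*q = 1"
  proof -
    have "p*p - \<epsilon>*q*q = N/(s*s)" unfolding p_def q_def N_def using sn by (simp add: field_simps)
    moreover have "N \<noteq> 0" using s(1) sn by auto
    ultimately show ?thesis using s(1) by simp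
  qed
  have a12: "a1 = s*p" "a2 = s*q" unfolding p_def q_def using sn by simp_all
  have bb1: "\<epsilon>*a2*(a1*b2 - a2*b1) = N*b1" using ug(1) unfolding N_def by algebra
  have bb2: "a1*(a1*b2 - a2*b1) = N*b2" using ug(1) unfolding N_def by algebra
  have Nn: "N \<noteq> 0" using s(1) sn by auto
  have b12: "b1 = \<epsilon>*q*\<beta>" "b2 = p*\<beta>"
  proof -
    have "\<epsilon>*q*\<beta> = (\<epsilon>*a2*(a1*b2 - a2*b1))/(s*s)" unfolding q_def \<beta>_def using sn by (simp add: field_simps)
    also have "\<dots> = b1" unfolding bb1 s(1) using Nn by simp
    finally show "b1 = \<epsilon>*q*\<beta>" by simp
    have "p*\<beta> = (a1*(a1*b2 - a2*b1))/(s*s)" unfolding p_def \<beta>_def using sn by (simp add: field_simps)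
    also have "\<dots> = b2" unfolding bb2 s(1) using Nn by simp
    finally show "b2 = p*\<beta>" by simp
  qed
  have lam: "M2 (p,q) e0 e0 (p,q) \<in> center \<epsilon>" using center_iff[OF t2] pq by blast
  have \<beta>I: "val_ge \<nu> \<beta> 0"
  proof -
    have "val_ge \<nu> (a1*b2 - a2*b1) 0" using I by blast
    from val_ge_divide[OF nl this sn(1)] show ?thesis unfolding \<beta>_def using sn by simp
  qed
  have n: "M2 e1 (esqrt \<beta>) e0 e1 \<in> Ugrp \<nu> \<epsilon>" unfolding Ugrp_iff using \<beta>I by blast
  have sN: "s*s - \<epsilon>*\<beta>*\<gamma> = 1"
  proof -
    have "b1*b1 - \<epsilon>*b2*b2 = -\<epsilon>*\<beta>*\<beta>*(p*p - \<epsilon>*q*q)" unfolding b12 by (simp add: algebra_simps)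
    then have E: "b1*b1 - \<epsilon>*b2*b2 = -\<epsilon>*\<beta>*\<beta>" using pq by simp
    have "N - 1 = - (r*(-\<epsilon>*\<beta>*\<beta>))" using N1 unfolding E .
    then have "N = 1 + \<epsilon>*\<beta>*(r*\<beta>)" by (simp add: algebra_simps)
    then show ?thesis using s(1) unfolding \<gamma>_def by simp
  qed
  have mm: "m \<le> m'" using m_facts by simp
  have \<gamma>m: "val_ge \<nu> \<gamma> m'" unfolding \<gamma>_def using r(2) \<beta>I by blast
  have j: "M2 (s - \<epsilon>*\<beta>*\<gamma>, 0) (0, \<beta> - \<beta>*s) (0, \<gamma>) (s, 0) \<in> Jgrp \<nu> \<epsilon> d"
  proof (rule J_explicit)
    show "(s - \<epsilon>*\<beta>*\<gamma>)*s - \<epsilon>*\<gamma>*(\<beta> - \<beta>*s) = 1" using sN by (simp add: algebra_simps)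
    have "val_ge \<nu> (s - 1 - \<epsilon>*\<beta>*\<gamma>) m'" using s(2) \<gamma>m \<beta>I by (blast intro: vg_eps)
    then show "val_ge \<nu> (s - \<epsilon>*\<beta>*\<gamma> - 1) m" using vg_mono[OF _ mm] by (simp add: algebra_simps)
    show "val_ge \<nu> (s - 1) m" using vg_mono[OF s(2) mm] .
    have "val_ge \<nu> (-(\<beta>*(s - 1))) m'" using s(2) \<beta>I by simp blast
    then show "val_ge \<nu> (\<beta> - \<beta>*s) m" using vg_mono[OF _ mm] by (simp add: algebra_simps)
    show "val_ge \<nu> \<gamma> m'" by (rule \<gamma>m)
  qed
  have prod: "mmul \<epsilon> (mmul \<epsilon> (M2 (p,q) e0 e0 (p,q)) (M2 e1 (esqrt \<beta>) e0 e1))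
      (M2 (s - \<epsilon>*\<beta>*\<gamma>, 0) (0, \<beta> - \<beta>*s) (0, \<gamma>) (s, 0))
      = M2 (s*p, s*q) (\<epsilon>*q*\<beta>, p*\<beta>) (r*(\<epsilon>*q*\<beta>), r*(p*\<beta>)) (s*p, s*q)"
    unfolding \<gamma>_def by (simp add: Es algebra_simps)
  have "t = M2 (s*p, s*q) (\<epsilon>*q*\<beta>, p*\<beta>) (r*(\<epsilon>*q*\<beta>), r*(p*\<beta>)) (s*p, s*q)"
    unfolding kk using cm a12 b12 by simp
  then have "t = mmul \<epsilon> (mmul \<epsilon> (M2 (p,q) e0 e0 (p,q)) (M2 e1 (esqrt \<beta>) e0 e1))
      (M2 (s - \<epsilon>*\<beta>*\<gamma>, 0) (0, \<beta> - \<beta>*s) (0, \<gamma>) (s, 0))" unfolding prod .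
  moreover have "mmul \<epsilon> (M2 (p,q) e0 e0 (p,q)) (M2 e1 (esqrt \<beta>) e0 e1) \<in> setmul \<epsilon> (center \<epsilon>) (Ugrp \<nu> \<epsilon>)"
    unfolding setmul_def using lam n by blast
  ultimately show ?thesis using j by blast
qed

end


context L5 begin

lemma T1b:
  assumes g: "g \<in> setmul \<epsilon> (center \<epsilon>) (Ugrp \<nu> \<epsilon>)"
  shows "\<exists>t \<in> centralizerK \<nu> \<epsilon> X. \<exists>j \<in> Jgrp \<nu> \<epsilon> d. g = mmul \<epsilon> t j"
proof -
  obtain l n where l: "l \<in> center \<epsilon>" and n: "n \<in> Ugrp \<nu> \<epsilon>" and g: "g = mmul \<epsilon> l n"
    using g unfolding setmul_def by blast
  obtain x y where lx: "l = M2 (x,y) e0 e0 (x,y)" using l center_iff[OF t2] by blast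
  obtain b where nb: "n = M2 e1 (esqrt b) e0 e1" and b: "val_ge \<nu> b 0" using n Ugrp_iff by blast
  have xy: "val_ge \<nu> x 0" "val_ge \<nu> y 0" using center_int l lx by auto
  define r where "r = v/u"
  have r: "r * u = v" "val_ge \<nu> r m'" using r_facts by (simp_all add: r_def)
  define \<gamma> where "\<gamma> = r*b"
  have \<gamma>m: "val_ge \<nu> \<gamma> m'" unfolding \<gamma>_def using r(2) b by blast
  have "val_ge \<nu> (\<epsilon>*b*\<gamma>) m'" using \<gamma>m b by (blast intro: vg_eps)
  then have "val_ge \<nu> ((1 + \<epsilon>*b*\<gamma>) - 1) m'" by simp
  from hensel_sqrt[OF nl two m_facts(4) this] obtain s where s: "s*s = 1 + \<epsilon>*b*\<gamma>" "val_ge \<nu> (s - 1) m'" by blast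
  have mm: "m \<le> m'" "0 \<le> m'" using m_facts by simp_all
  have sI: "val_ge \<nu> s 0" using vg_near1[OF s(2) mm(2)] .
  define t where "t = M2 (s,0) (0,b) (0,\<gamma>) (s,0)"
  define j where "j = M2 (s,0) (0, s*b - b) (0, -\<gamma>) (s - \<epsilon>*\<gamma>*b, 0)"
  have tUG: "t \<in> UG \<epsilon>" unfolding t_def UGc using s(1) by (simp add: algebra_simps)
  have ltUG: "mmul \<epsilon> l t \<in> UG \<epsilon>" by (rule UG_mult[OF center_UG[OF l] tUG])
  have lt: "mmul \<epsilon> l t \<in> centralizerK \<nu> \<epsilon> X"
  proof -
    have "mmul \<epsilon> l t \<in> Kmax \<nu> \<epsilon>" using ltUG unfolding lx t_def
      using xy sI b vg_mono[OF \<gamma>m mm(2)] by (simp add: Es K_iff) (blast intro: vg_eps)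
    moreover have "mmul \<epsilon> (mmul \<epsilon> l t) X = mmul \<epsilon> X (mmul \<epsilon> l t)"
    proof -
      have "mmul \<epsilon> (mmul \<epsilon> l t) X = mmul \<epsilon> (mmul \<epsilon> l t) (M2 (0,z) (0, u) (0, r*u) (0,z))"
        using r(1) by (simp add: esqrt_def)
      also have "\<dots> = mmul \<epsilon> (M2 (0,z) (0, u) (0, r*u) (0,z)) (mmul \<epsilon> l t)"
        unfolding lx t_def \<gamma>_def by (simp add: Es algebra_simps)
      also have "\<dots> = mmul \<epsilon> X (mmul \<epsilon> l t)" using r(1) by (simp add: esqrt_def)
      finally show ?thesis .
    qed
    ultimately show ?thesis by (simp add: centralizerK_def)
  qed
  have jJ: "j \<in> Jgrp \<nu> \<epsilon> d" unfolding j_def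
  proof (rule J_explicit)
    show "s*(s - \<epsilon>*\<gamma>*b) - \<epsilon>*(-\<gamma>)*(s*b - b) = 1" using s(1) by (simp add: algebra_simps)
    show "val_ge \<nu> (s - 1) m" using vg_mono[OF s(2) mm(1)] .
    have "val_ge \<nu> (s - 1 - \<epsilon>*\<gamma>*b) m'" using s(2) \<gamma>m b by (blast intro: vg_eps)
    then show "val_ge \<nu> (s - \<epsilon>*\<gamma>*b - 1) m" using vg_mono[OF _ mm(1)] by (simp add: algebra_simps)
    have "val_ge \<nu> (b*(s - 1)) m'" using s(2) b by blast
    then show "val_ge \<nu> (s*b - b) m" using vg_mono[OF _ mm(1)] by (simp add: algebra_simps)
    show "val_ge \<nu> (-\<gamma>) m'" using \<gamma>m by simp
  qed
  have "mmul \<epsilon> t j = n" unfolding t_def j_def nb using s(1)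
    by (simp add: Es algebra_simps)
  then have "g = mmul \<epsilon> (mmul \<epsilon> l t) j" unfolding g by (simp add: mmul_assoc)
  then show ?thesis using lt jJ by blast
qed

end


theorem lemma5p9:
  fixes \<nu> :: "'a::field \<Rightarrow> int" and \<epsilon> :: 'a and \<psi> :: "'a \<times> 'a \<Rightarrow> complex"
    and d :: int and z u v :: 'a
  assumes "nonarch_local_field \<nu>" and "residue_char_not_2 \<nu>"
    and "\<epsilon> \<noteq> 0" and "\<nu> \<epsilon> = 0" and "\<not> (\<exists>y. y * y = \<epsilon>)"
    and "add_char_cond \<nu> \<psi>"
    and "d > 0"
    and "M2 (esqrt z) (esqrt u) (esqrt v) (esqrt z) \<in> kLie \<nu> \<epsilon> d"
    and "val_gt \<nu> z (- \<lceil>real_of_int d / 2\<rceil>)" and "val_gt \<nu> v (- \<lceil>real_of_int d / 2\<rceil>)"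
    and "u \<noteq> 0" and "\<nu> u = - d"
  shows "(\<forall>k \<in> Jgrp \<nu> \<epsilon> d.
            PsiC \<psi> \<epsilon> (M2 (esqrt z) (esqrt u) (esqrt v) (esqrt z)) k
          = PsiC \<psi> \<epsilon> (M2 e0 (esqrt u) e0 e0) k)
       \<and> setmul \<epsilon> (centralizerK \<nu> \<epsilon> (M2 (esqrt z) (esqrt u) (esqrt v) (esqrt z))) (Jgrp \<nu> \<epsilon> d)
         = setmul \<epsilon> (centralizerK \<nu> \<epsilon> (M2 e0 (esqrt u) e0 e0)) (Jgrp \<nu> \<epsilon> d)
       \<and> setmul \<epsilon> (centralizerK \<nu> \<epsilon> (M2 e0 (esqrt u) e0 e0)) (Jgrp \<nu> \<epsilon> d)
         = setmul \<epsilon> (setmul \<epsilon> (center \<epsilon>) (Ugrp \<nu> \<epsilon>)) (Jgrp \<nu> \<epsilon> d)"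
proof -
  have vz: "val_ge \<nu> z (1 - (d+1) div 2)" and vv: "val_ge \<nu> v (1 - (d+1) div 2)"
    using assms(9,10) unfolding val_gt_iff ceil_half by (simp_all add: algebra_simps)
  interpret L5 \<nu> \<epsilon> d z u v
    by unfold_locales (use assms vz vv in auto)
  define ZU where "ZU = setmul \<epsilon> (center \<epsilon>) (Ugrp \<nu> \<epsilon>)"
  define J where "J = Jgrp \<nu> \<epsilon> d"
  define T1 where "T1 = centralizerK \<nu> \<epsilon> (M2 (esqrt z) (esqrt u) (esqrt v) (esqrt z))"
  have JJ: "mmul \<epsilon> j1 j2 \<in> J" if "j1 \<in> J" "j2 \<in> J" for j1 j2
    using J_mult[OF that[unfolded J_def]] UG_mult that unfolding J_def Jgrp_def by blast
  have A: "setmul \<epsilon> T1 J = setmul \<epsilon> ZU J"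
  proof
    show "setmul \<epsilon> T1 J \<subseteq> setmul \<epsilon> ZU J"
    proof
      fix x assume "x \<in> setmul \<epsilon> T1 J"
      then obtain t j where t: "t \<in> T1" and j: "j \<in> J" and x: "x = mmul \<epsilon> t j"
        unfolding setmul_def by blast
      obtain g j' where g: "g \<in> ZU" and j': "j' \<in> J" and tg: "t = mmul \<epsilon> g j'"
        using T1a[OF t[unfolded T1_def]] unfolding ZU_def J_def by blast
      have "x = mmul \<epsilon> g (mmul \<epsilon> j' j)" unfolding x tg by (simp add: mmul_assoc)
      then show "x \<in> setmul \<epsilon> ZU J" unfolding setmul_def using g JJ[OF j' j] by blast
    qed
    show "setmul \<epsilon> ZU J \<subseteq> setmul \<epsilon> T1 J"
    proof
      fix x assume "x \<in> setmul \<epsilon> ZU J"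
      then obtain g j where g: "g \<in> ZU" and j: "j \<in> J" and x: "x = mmul \<epsilon> g j"
        unfolding setmul_def by blast
      obtain t j' where t: "t \<in> T1" and j': "j' \<in> J" and tg: "g = mmul \<epsilon> t j'"
        using T1b[OF g[unfolded ZU_def]] unfolding T1_def J_def by blast
      have "x = mmul \<epsilon> t (mmul \<epsilon> j' j)" unfolding x tg by (simp add: mmul_assoc)
      then show "x \<in> setmul \<epsilon> T1 J" unfolding setmul_def using t JJ[OF j' j] by blast
    qed
  qed
  have B: "setmul \<epsilon> (centralizerK \<nu> \<epsilon> (M2 e0 (esqrt u) e0 e0)) J = setmul \<epsilon> ZU J"
    using T0_eq unfolding ZU_def by simp
  show ?thesis
    using part1[OF assms(6)] A B unfolding ZU_def J_def T1_def by simp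
qed

end
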